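(* Suppose that every language satisfying the partial order condition belongs to $\mathbf{RMM}$. Then $\mathbf{RMM}$ is closed under intersection.
   Context: A DFA $(Q,\Sigma,\delta,q_0,F)$ satisfies the partial order condition if there do not exist two distinguishable states $q_1,q_2$ and strings $x,y\in\Sigma^+$ with $\delta(q_1,x)=\delta(q_2,x)=q_2$ and $\delta(q_2,y)=q_1$ (states are distinguishable if some $z\in\Sigma^*$ leads exactly one of them into $F$); a regular language satisfies it if its minimal DFA does. A measure-many quantum finite automaton (MM-QFA) over $\Sigma$ is a tuple $(Q,\Sigma,\{U_\sigma\}_{\sigma\in\Sigma\cup\{\$\}},q_0,Q_{acc},Q_{rej})$ with $Q$ finite indexing an orthonormal basis of $\mathbb{C}^Q$, end-marker $\$\notin\Sigma$, unitary $U_\sigma$, initial state $q_0$, and $Q$ partitioned into $Q_{acc},Q_{rej},Q_{non}$ with projections $P_{acc},P_{rej},P_{non}$ onto the corresponding spans. On input $x$ it processes $x\$$ maintaining $(\psi,p_{acc},p_{rej})$, initially $(|q_0\rangle,0,0)$; on reading $\sigma$: $\psi'=U_\sigma\psi$, $p_{acc}\mathrel{+}=\|P_{acc}\psi'\|^2$, $p_{rej}\mathrel{+}=\|P_{rej}\psi'\|^2$, $\psi\leftarrow P_{non}\psi'$; the acceptance probability is the final $p_{acc}$. $\mathbf{RMM}$ is the class of languages $L$ for which some MM-QFA and some $\lambda$, $\epsilon>0$ give acceptance probability $>\lambda+\epsilon$ on $x\in L$ and $<\lambda-\epsilon$ on $x\notin L$. *)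

theory Defs
  imports Complex_Main
begin

text \<open>Alphabet: a finite type 'a (Sigma = UNIV); strings are lists.
  A DFA with state set Q, total transition function delta, final states F.\<close>

definition dfa_run :: "('q \<Rightarrow> 'a \<Rightarrow> 'q) \<Rightarrow> 'q \<Rightarrow> 'a list \<Rightarrow> 'q" where
  "dfa_run delta q w = foldl delta q w"

definition dfa_distinguishable ::
  "('q \<Rightarrow> 'a \<Rightarrow> 'q) \<Rightarrow> 'q set \<Rightarrow> 'q \<Rightarrow> 'q \<Rightarrow> bool" where
  "dfa_distinguishable delta F q1 q2 \<longleftrightarrow>
     (\<exists>z. (dfa_run delta q1 z \<in> F) \<noteq> (dfa_run delta q2 z \<in> F))"

definition dfa_poc :: "'q set \<Rightarrow> ('q \<Rightarrow> 'a \<Rightarrow> 'q) \<Rightarrow> 'q set \<Rightarrow> bool" where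
  "dfa_poc Q delta F \<longleftrightarrow>
     \<not> (\<exists>q1\<in>Q. \<exists>q2\<in>Q. \<exists>x y. x \<noteq> [] \<and> y \<noteq> [] \<and>
           dfa_distinguishable delta F q1 q2 \<and>
           dfa_run delta q1 x = q2 \<and> dfa_run delta q2 x = q2 \<and>
           dfa_run delta q2 y = q1)"

text \<open>The minimal DFA of a language L (Myhill--Nerode): states are the left
  quotients u^{-1}L, start state L, transitions S -sigma-> sigma^{-1}S,
  final states those containing the empty word. L is regular iff there are
  finitely many quotients.\<close>

definition lquot :: "'a list set \<Rightarrow> 'a list \<Rightarrow> 'a list set" where
  "lquot L u = {w. u @ w \<in> L}"

definition min_dfa_states :: "'a list set \<Rightarrow> 'a list set set" where
  "min_dfa_states L = range (lquot L)"

definition min_dfa_delta :: "'a list set \<Rightarrow> 'a \<Rightarrow> 'a list set" where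
  "min_dfa_delta S \<sigma> = {w. \<sigma> # w \<in> S}"

definition min_dfa_final :: "'a list set set" where
  "min_dfa_final = {S. [] \<in> S}"

definition regular_lang :: "'a list set \<Rightarrow> bool" where
  "regular_lang L \<longleftrightarrow> finite (min_dfa_states L)"

definition poc_lang :: "'a list set \<Rightarrow> bool" where
  "poc_lang L \<longleftrightarrow> regular_lang L \<and>
     dfa_poc (min_dfa_states L) min_dfa_delta min_dfa_final"

text \<open>Basis states are {..<n}; a state vector is a function nat => complex
  (only indices < n matter). The input alphabet of the automaton is
  'a option, with None playing the role of the end-marker.\<close>

definition mat_vec :: "nat \<Rightarrow> (nat \<Rightarrow> nat \<Rightarrow> complex) \<Rightarrow> (nat \<Rightarrow> complex) \<Rightarrow> nat \<Rightarrow> complex" where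
  "mat_vec n U \<psi> = (\<lambda>i. \<Sum>j<n. U i j * \<psi> j)"

definition unitary_n :: "nat \<Rightarrow> (nat \<Rightarrow> nat \<Rightarrow> complex) \<Rightarrow> bool" where
  "unitary_n n U \<longleftrightarrow>
     (\<forall>i<n. \<forall>j<n. (\<Sum>k<n. cnj (U k i) * U k j) = (if i = j then 1 else 0))"

definition proj_norm2 :: "nat set \<Rightarrow> (nat \<Rightarrow> complex) \<Rightarrow> real" where
  "proj_norm2 P \<psi> = (\<Sum>i\<in>P. (cmod (\<psi> i))\<^sup>2)"

definition mmqfa_wf ::
  "nat \<Rightarrow> ('a option \<Rightarrow> nat \<Rightarrow> nat \<Rightarrow> complex) \<Rightarrow> nat \<Rightarrow> nat set \<Rightarrow> nat set \<Rightarrow> bool" where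
  "mmqfa_wf n U q0 Acc Rej \<longleftrightarrow>
     q0 < n \<and> Acc \<subseteq> {..<n} \<and> Rej \<subseteq> {..<n} \<and> Acc \<inter> Rej = {} \<and>
     (\<forall>\<sigma>. unitary_n n (U \<sigma>))"

definition mmqfa_step ::
  "nat \<Rightarrow> ('a option \<Rightarrow> nat \<Rightarrow> nat \<Rightarrow> complex) \<Rightarrow> nat set \<Rightarrow> nat set \<Rightarrow>
   (nat \<Rightarrow> complex) \<times> real \<times> real \<Rightarrow> 'a option \<Rightarrow> (nat \<Rightarrow> complex) \<times> real \<times> real" where
  "mmqfa_step n U Acc Rej st \<sigma> =
     (case st of (\<psi>, pa, pr) \<Rightarrow>
       (let \<psi>' = mat_vec n (U \<sigma>) \<psi>;
            Non = {..<n} - Acc - Rej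
        in ((\<lambda>i. if i \<in> Non then \<psi>' i else 0),
            pa + proj_norm2 Acc \<psi>',
            pr + proj_norm2 Rej \<psi>')))"

definition mmqfa_accept_prob ::
  "nat \<Rightarrow> ('a option \<Rightarrow> nat \<Rightarrow> nat \<Rightarrow> complex) \<Rightarrow> nat \<Rightarrow> nat set \<Rightarrow> nat set \<Rightarrow> 'a list \<Rightarrow> real" where
  "mmqfa_accept_prob n U q0 Acc Rej x =
     fst (snd (foldl (mmqfa_step n U Acc Rej)
                 ((\<lambda>i. if i = q0 then 1 else 0), 0, 0)
                 (map Some x @ [None])))"

definition RMM :: "'a list set set" where
  "RMM = {L. \<exists>n U q0 Acc Rej (lam::real) (\<epsilon>::real).
             mmqfa_wf n U q0 Acc Rej \<and> \<epsilon> > 0 \<and>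
             (\<forall>x. (x \<in> L \<longrightarrow> mmqfa_accept_prob n U q0 Acc Rej x > lam + \<epsilon>) \<and>
                  (x \<notin> L \<longrightarrow> mmqfa_accept_prob n U q0 Acc Rej x < lam - \<epsilon>))}"

end

theory Submission
  imports Defs "HOL-Analysis.L2_Norm" "HOL-Library.Function_Algebras"
begin

definition cellf :: "real \<Rightarrow> complex \<Rightarrow> int \<times> int" where
  "cellf d z = (floor (Re z / d), floor (Im z / d))"

lemma cellf_close:
  assumes "d > 0" "cellf d z = cellf d w"
  shows "cmod (z - w) < 2 * d"
proof -
  have a: "floor (Re z / d) = floor (Re w / d)" and b: "floor (Im z / d) = floor (Im w / d)"
    using assms(2) by (auto simp: cellf_def)
  have "\<bar>Re z / d - Re w / d\<bar> < 1" using a by linarith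
  hence "\<bar>Re z - Re w\<bar> < d" using assms(1) by (simp add: diff_divide_distrib[symmetric] abs_divide) 
  moreover have "\<bar>Im z / d - Im w / d\<bar> < 1" using b by linarith
  hence "\<bar>Im z - Im w\<bar> < d" using assms(1) by (simp add: diff_divide_distrib[symmetric] abs_divide)
  ultimately show ?thesis using cmod_le[of "z - w"] by simp
qed

lemma floor_range:
  fixes x c :: real
  assumes "\<bar>x\<bar> \<le> c"
  shows "floor x \<in> {-(ceiling c)-1 .. ceiling c}"
proof -
  have "floor x \<le> ceiling c" using assms by (meson abs_le_D1 floor_le_ceiling floor_mono le_floor_iff order_trans)
  moreover have "-(ceiling c) - 1 \<le> floor x"
  proof -
    have "- c \<le> x" using assms by linarith
    have "real_of_int (floor x) > x - 1" by linarith
    moreover have "real_of_int (ceiling c) \<ge> c" by (rule le_of_int_ceiling)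
    ultimately have "real_of_int (floor x) > - real_of_int (ceiling c) - 1" using \<open>- c \<le> x\<close> by linarith
    thus ?thesis by linarith
  qed
  ultimately show ?thesis by simp
qed

lemma cellf_range:
  assumes "d > 0" "cmod z \<le> 1"
  shows "cellf d z \<in> {-(ceiling (1/d))-1 .. ceiling (1/d)} \<times> {-(ceiling (1/d))-1 .. ceiling (1/d)}"
proof -
  have r: "\<bar>Re z\<bar> \<le> 1" "\<bar>Im z\<bar> \<le> 1" using assms abs_Re_le_cmod abs_Im_le_cmod by (auto intro: order_trans)
  have "\<bar>Re z / d\<bar> \<le> 1/d" "\<bar>Im z / d\<bar> \<le> 1/d" using r assms(1) by (auto simp: abs_divide divide_right_mono)
  thus ?thesis unfolding cellf_def using floor_range by blast
qed

definition gridset :: "'i set \<Rightarrow> real \<Rightarrow> ('i \<Rightarrow> int \<times> int) set" where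
  "gridset I d = {g. \<forall>x. (x \<in> I \<longrightarrow> g x \<in> {-(ceiling (1/d))-1 .. ceiling (1/d)} \<times> {-(ceiling (1/d))-1 .. ceiling (1/d)}) \<and> (x \<notin> I \<longrightarrow> g x = (0,0))}"

lemma finite_gridset: "finite I \<Longrightarrow> finite (gridset I d)"
  unfolding gridset_def by (rule finite_set_of_finite_funs) auto

definition gcell :: "'i set \<Rightarrow> real \<Rightarrow> ('i \<Rightarrow> complex) \<Rightarrow> ('i \<Rightarrow> int \<times> int)" where
  "gcell I d v = (\<lambda>i. if i \<in> I then cellf d (v i) else (0,0))"

lemma gcell_in: "d > 0 \<Longrightarrow> (\<forall>i\<in>I. cmod (v i) \<le> 1) \<Longrightarrow> gcell I d v \<in> gridset I d"
  unfolding gridset_def gcell_def using cellf_range by auto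

lemma gcell_close: "d > 0 \<Longrightarrow> gcell I d v = gcell I d w \<Longrightarrow> i \<in> I \<Longrightarrow> cmod (v i - w i) < 2 * d"
  unfolding gcell_def by (metis cellf_close)

lemma grid_pigeon:
  assumes "finite I" "d > 0"
  shows "\<exists>G. \<forall>f::nat \<Rightarrow> 'i \<Rightarrow> complex. (\<forall>t\<le>G. \<forall>i\<in>I. cmod (f t i) \<le> 1) \<longrightarrow>
           (\<exists>t1 t2. t1 < t2 \<and> t2 \<le> G \<and> (\<forall>i\<in>I. cmod (f t1 i - f t2 i) < 2 * d))"
proof (rule exI[of _ "card (gridset I d)"], intro allI impI)
  fix f :: "nat \<Rightarrow> 'i \<Rightarrow> complex"
  assume h: "\<forall>t\<le>card (gridset I d). \<forall>i\<in>I. cmod (f t i) \<le> 1"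
  let ?G = "card (gridset I d)"
  have sub: "(\<lambda>t. gcell I d (f t)) ` {..?G} \<subseteq> gridset I d" using h by (auto intro!: gcell_in[OF assms(2)])
  have "\<not> inj_on (\<lambda>t. gcell I d (f t)) {..?G}"
  proof
    assume "inj_on (\<lambda>t. gcell I d (f t)) {..?G}"
    from card_inj_on_le[OF this sub finite_gridset[OF assms(1)]] show False by simp
  qed
  then obtain a b where ab: "a \<le> ?G" "b \<le> ?G" "a \<noteq> b" "gcell I d (f a) = gcell I d (f b)"
    unfolding inj_on_def by auto
  show "\<exists>t1 t2. t1 < t2 \<and> t2 \<le> ?G \<and> (\<forall>i\<in>I. cmod (f t1 i - f t2 i) < 2 * d)"
  proof (cases "a < b")
    case True
    have "\<forall>i\<in>I. cmod (f a i - f b i) < 2*d" using gcell_close[OF assms(2) ab(4)] by blast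
    thus ?thesis using True ab(2) by blast
  next
    case False
    hence "b < a" using ab by simp
    have "\<forall>i\<in>I. cmod (f b i - f a i) < 2*d" using gcell_close[OF assms(2) ab(4)[symmetric]] by blast
    thus ?thesis using \<open>b < a\<close> ab(1) by blast
  qed
qed

lemma grid_pigeon_inf:
  assumes "finite I" "d > 0" "infinite T" "\<forall>t\<in>T. \<forall>i\<in>I. cmod (f t i) \<le> 1"
  shows "\<exists>t1\<in>T. \<exists>t2\<in>T. t1 \<noteq> t2 \<and> (\<forall>i\<in>I. cmod (f t1 i - f t2 i) < 2 * d)"
proof -
  have sub: "(\<lambda>t. gcell I d (f t)) ` T \<subseteq> gridset I d" using assms(4) by (auto intro!: gcell_in[OF assms(2)])
  have "\<not> inj_on (\<lambda>t. gcell I d (f t)) T"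
    using finite_imageD finite_subset[OF sub finite_gridset[OF assms(1)]] assms(3) by blast
  then obtain a b where ab: "a \<in> T" "b \<in> T" "a \<noteq> b" "gcell I d (f a) = gcell I d (f b)"
    unfolding inj_on_def by blast
  have "\<forall>i\<in>I. cmod (f a i - f b i) < 2*d" using gcell_close[OF assms(2) ab(4)] by blast
  thus ?thesis using ab(1-3) by blast
qed

definition nr :: "nat set \<Rightarrow> (nat \<Rightarrow> complex) \<Rightarrow> real" where
  "nr A v = L2_set (\<lambda>i. cmod (v i)) A"

lemma nr_nonneg[simp]: "0 \<le> nr A v" unfolding nr_def by simp

lemma proj_nr: "finite A \<Longrightarrow> proj_norm2 A v = (nr A v)^2"
  unfolding proj_norm2_def nr_def L2_set_def by (simp add: sum_nonneg)

lemma proj_nonneg[simp]: "0 \<le> proj_norm2 A v"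
  unfolding proj_norm2_def by (simp add: sum_nonneg)

lemma nr_add: "nr A (\<lambda>i. a i + b i) \<le> nr A a + nr A b"
proof -
  have "nr A (\<lambda>i. a i + b i) \<le> L2_set (\<lambda>i. cmod (a i) + cmod (b i)) A"
    unfolding nr_def by (rule L2_set_mono) (auto simp: norm_triangle_ineq)
  also have "\<dots> \<le> nr A a + nr A b" unfolding nr_def by (rule L2_set_triangle_ineq)
  finally show ?thesis .
qed

lemma nr_add': "nr A (a + b) \<le> nr A a + nr A b"
  using nr_add[of A a b] by (simp add: plus_fun_def)

lemma nr_minus_sym: "nr A (a - b) = nr A (b - a)"
  unfolding nr_def by (simp add: norm_minus_commute)

lemma nr_tri: "nr A v \<le> nr A w + nr A (v - w)"
  using nr_add'[of A w "v - w"] by simp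

lemma nr_diff: "\<bar>nr A v - nr A w\<bar> \<le> nr A (v - w)"
  using nr_tri[of A v w] nr_tri[of A w v] nr_minus_sym[of A v w] by linarith

lemma nr_coord_bound:
  assumes "\<forall>i\<in>A. cmod (v i) \<le> d"
  shows "nr A v \<le> real (card A) * d"
proof -
  have "nr A v \<le> (\<Sum>i\<in>A. cmod (v i))" unfolding nr_def by (rule L2_set_le_sum) simp
  also have "\<dots> \<le> (\<Sum>i\<in>A. d)" using assms by (intro sum_mono) auto
  finally show ?thesis by simp
qed

lemma member_le_nr: "finite A \<Longrightarrow> i \<in> A \<Longrightarrow> cmod (v i) \<le> nr A v"
  unfolding nr_def by (rule member_le_L2_set)

lemma sq_diff_le:
  fixes x y d :: real
  assumes "\<bar>x - y\<bar> \<le> d" "0 \<le> x" "0 \<le> y"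
  shows "\<bar>x^2 - y^2\<bar> \<le> d * (x + y)"
proof -
  have "x^2 - y^2 = (x - y) * (x + y)" by (simp add: power2_eq_square algebra_simps)
  hence "\<bar>x^2 - y^2\<bar> = \<bar>x - y\<bar> * (x + y)" using assms by (simp add: abs_mult)
  also have "\<dots> \<le> d * (x + y)" using assms by (intro mult_right_mono) auto
  finally show ?thesis .
qed

lemma cs2:
  fixes x1 x2 y1 y2 :: real
  shows "x1*y1 + x2*y2 \<le> sqrt (x1^2+x2^2) * sqrt (y1^2+y2^2)"
proof -
  have "(x1*y1 + x2*y2)^2 \<le> (x1^2+x2^2) * (y1^2+y2^2)"
  proof -
    have "(x1^2+x2^2) * (y1^2+y2^2) - (x1*y1 + x2*y2)^2 = (x1*y2 - x2*y1)^2"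
      by (simp add: power2_eq_square algebra_simps)
    thus ?thesis by (metis diff_ge_0_iff_ge zero_le_power2)
  qed
  hence "x1*y1 + x2*y2 \<le> sqrt ((x1^2+x2^2) * (y1^2+y2^2))" by (rule real_le_rsqrt)
  thus ?thesis by (simp add: real_sqrt_mult)
qed

lemma cs2b:
  fixes x1 x2 y1 y2 z1 z2 :: real
  shows "x1*(y1+z1) + x2*(y2+z2) \<le> sqrt (x1^2+x2^2) * (sqrt (y1^2+y2^2) + sqrt (z1^2+z2^2))"
  using cs2[of x1 y1 x2 y2] cs2[of x1 z1 x2 z2] by (simp add: algebra_simps)

locale qfa =
  fixes n :: nat and U :: "'a option \<Rightarrow> nat \<Rightarrow> nat \<Rightarrow> complex" and q0 :: nat
    and Acc Rej :: "nat set"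
  assumes wf: "mmqfa_wf n U q0 Acc Rej"
begin

definition Non :: "nat set" where "Non = {..<n} - Acc - Rej"
definition mv :: "'a option \<Rightarrow> (nat \<Rightarrow> complex) \<Rightarrow> nat \<Rightarrow> complex" where
  "mv \<sigma> \<psi> = mat_vec n (U \<sigma>) \<psi>"
definition Tm :: "'a option \<Rightarrow> (nat \<Rightarrow> complex) \<Rightarrow> nat \<Rightarrow> complex" where
  "Tm \<sigma> \<psi> = (\<lambda>i. if i \<in> Non then mv \<sigma> \<psi> i else 0)"
definition nn :: "(nat \<Rightarrow> complex) \<Rightarrow> real" where "nn v = nr {..<n} v"
definition nsq :: "(nat \<Rightarrow> complex) \<Rightarrow> real" where "nsq v = proj_norm2 {..<n} v"

primrec vec :: "'a option list \<Rightarrow> (nat \<Rightarrow> complex) \<Rightarrow> nat \<Rightarrow> complex" where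
  "vec [] \<psi> = \<psi>" | "vec (\<sigma>#w) \<psi> = vec w (Tm \<sigma> \<psi>)"
primrec gain :: "'a option list \<Rightarrow> (nat \<Rightarrow> complex) \<Rightarrow> real" where
  "gain [] \<psi> = 0" | "gain (\<sigma>#w) \<psi> = proj_norm2 Acc (mv \<sigma> \<psi>) + gain w (Tm \<sigma> \<psi>)"
primrec rgain :: "'a option list \<Rightarrow> (nat \<Rightarrow> complex) \<Rightarrow> real" where
  "rgain [] \<psi> = 0" | "rgain (\<sigma>#w) \<psi> = proj_norm2 Rej (mv \<sigma> \<psi>) + rgain w (Tm \<sigma> \<psi>)"

lemma facts: "q0 < n" "Acc \<subseteq> {..<n}" "Rej \<subseteq> {..<n}" "Acc \<inter> Rej = {}" "unitary_n n (U \<sigma>)"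
  using wf unfolding mmqfa_wf_def by auto

lemma finAR[simp]: "finite Acc" "finite Rej" "finite Non"
  using facts(2,3) finite_subset[OF _ finite_lessThan[of n]] unfolding Non_def by auto

lemma nsq_nn: "nsq v = (nn v)^2" unfolding nsq_def nn_def by (simp add: proj_nr)
lemma nn_nonneg[simp]: "0 \<le> nn v" unfolding nn_def by simp
lemma nsq_nonneg[simp]: "0 \<le> nsq v" unfolding nsq_def by simp

lemma mv_diff: "mv \<sigma> (a - b) = mv \<sigma> a - mv \<sigma> b"
  unfolding mv_def mat_vec_def by (simp add: fun_eq_iff algebra_simps sum_subtractf)
lemma mv_add: "mv \<sigma> (a + b) = mv \<sigma> a + mv \<sigma> b"
  unfolding mv_def mat_vec_def by (simp add: fun_eq_iff algebra_simps sum.distrib)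
lemma Tm_diff: "Tm \<sigma> (a - b) = Tm \<sigma> a - Tm \<sigma> b"
  unfolding Tm_def by (simp add: fun_eq_iff mv_diff)
lemma Tm_add: "Tm \<sigma> (a + b) = Tm \<sigma> a + Tm \<sigma> b"
  unfolding Tm_def by (simp add: fun_eq_iff mv_add)
lemma vec_diff: "vec w (a - b) = vec w a - vec w b"
  by (induction w arbitrary: a b) (simp_all add: Tm_diff)
lemma vec_add: "vec w (a + b) = vec w a + vec w b"
  by (induction w arbitrary: a b) (simp_all add: Tm_add)
lemma vec_append: "vec (w1 @ w2) \<psi> = vec w2 (vec w1 \<psi>)"
  by (induction w1 arbitrary: \<psi>) simp_all
lemma gain_append: "gain (w1 @ w2) \<psi> = gain w1 \<psi> + gain w2 (vec w1 \<psi>)"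
  by (induction w1 arbitrary: \<psi>) simp_all

lemma unitary_sq: "nsq (mv \<sigma> \<psi>) = nsq \<psi>"
proof -
  let ?V = "U \<sigma>"
  have un: "\<And>i j. i < n \<Longrightarrow> j < n \<Longrightarrow> (\<Sum>k<n. cnj (?V k i) * ?V k j) = (if i = j then 1 else 0)"
    using facts(5)[of \<sigma>] unfolding unitary_n_def by blast
  have "complex_of_real (nsq (mv \<sigma> \<psi>)) = (\<Sum>i<n. mv \<sigma> \<psi> i * cnj (mv \<sigma> \<psi> i))"
    unfolding nsq_def proj_norm2_def of_real_sum by (intro sum.cong refl) (rule complex_norm_square)
  also have "\<dots> = (\<Sum>i<n. (\<Sum>j<n. ?V i j * \<psi> j) * (\<Sum>k<n. cnj (?V i k) * cnj (\<psi> k)))"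
    unfolding mv_def mat_vec_def by simp
  also have "\<dots> = (\<Sum>i<n. \<Sum>j<n. \<Sum>k<n. (?V i j * \<psi> j) * (cnj (?V i k) * cnj (\<psi> k)))"
    by (simp only: sum_product)
  also have "\<dots> = (\<Sum>i<n. \<Sum>j<n. \<Sum>k<n. \<psi> j * cnj (\<psi> k) * (cnj (?V i k) * ?V i j))"
    by (intro sum.cong refl) (simp only: mult.assoc mult.commute mult.left_commute)
  also have "\<dots> = (\<Sum>j<n. \<Sum>i<n. \<Sum>k<n. \<psi> j * cnj (\<psi> k) * (cnj (?V i k) * ?V i j))"
    by (rule sum.swap)
  also have "\<dots> = (\<Sum>j<n. \<Sum>k<n. \<Sum>i<n. \<psi> j * cnj (\<psi> k) * (cnj (?V i k) * ?V i j))"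
    by (rule sum.cong[OF refl], rule sum.swap)
  also have "\<dots> = (\<Sum>j<n. \<Sum>k<n. \<psi> j * cnj (\<psi> k) * (\<Sum>i<n. cnj (?V i k) * ?V i j))"
    by (simp only: sum_distrib_left)
  also have "\<dots> = (\<Sum>j<n. \<Sum>k<n. \<psi> j * cnj (\<psi> k) * (if k = j then 1 else 0))"
    by (intro sum.cong refl) (simp add: un)
  also have "\<dots> = (\<Sum>j<n. \<psi> j * cnj (\<psi> j))"
  proof (rule sum.cong[OF refl])
    fix j assume j: "j \<in> {..<n}"
    have "(\<Sum>k<n. \<psi> j * cnj (\<psi> k) * (if k = j then 1 else 0)) = (\<Sum>k<n. if k = j then \<psi> j * cnj (\<psi> k) else 0)"
      by (rule sum.cong) auto
    also have "\<dots> = \<psi> j * cnj (\<psi> j)" using j by (simp add: sum.delta)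
    finally show "(\<Sum>k<n. \<psi> j * cnj (\<psi> k) * (if k = j then 1 else 0)) = \<psi> j * cnj (\<psi> j)" .
  qed
  also have "\<dots> = complex_of_real (nsq \<psi>)"
    unfolding nsq_def proj_norm2_def of_real_sum by (intro sum.cong refl) (rule complex_norm_square[symmetric])
  finally show ?thesis using of_real_eq_iff by blast
qed

lemma conserv: "proj_norm2 Acc (mv \<sigma> \<psi>) + proj_norm2 Rej (mv \<sigma> \<psi>) + nsq (Tm \<sigma> \<psi>) = nsq \<psi>"
proof -
  have "nsq (Tm \<sigma> \<psi>) = (\<Sum>i<n. if i\<in>Non then (cmod (mv \<sigma> \<psi> i))^2 else 0)"
    unfolding nsq_def proj_norm2_def Tm_def by (intro sum.cong refl) auto
  also have "\<dots> = (\<Sum>i\<in>{..<n} \<inter> Non. (cmod (mv \<sigma> \<psi> i))^2)"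
    by (rule sum.inter_restrict[symmetric]) simp
  also have "{..<n} \<inter> Non = Non" unfolding Non_def by auto
  finally have "nsq (Tm \<sigma> \<psi>) = proj_norm2 Non (mv \<sigma> \<psi>)" unfolding proj_norm2_def .
  moreover have "nsq (mv \<sigma> \<psi>) = proj_norm2 Acc (mv \<sigma> \<psi>) + proj_norm2 Rej (mv \<sigma> \<psi>) + proj_norm2 Non (mv \<sigma> \<psi>)"
  proof -
    define f where "f = (\<lambda>i. (cmod (mv \<sigma> \<psi> i))^2)"
    have e: "{..<n} = (Acc \<union> Rej) \<union> Non" using facts unfolding Non_def by auto
    have d1: "(Acc \<union> Rej) \<inter> Non = {}" unfolding Non_def by auto
    have "sum f {..<n} = sum f (Acc \<union> Rej) + sum f Non"
      by (subst e, rule sum.union_disjoint) (use d1 in auto)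
    also have "sum f (Acc \<union> Rej) = sum f Acc + sum f Rej"
      by (rule sum.union_disjoint) (use facts in auto)
    finally show ?thesis unfolding nsq_def proj_norm2_def f_def by simp
  qed
  ultimately show ?thesis using unitary_sq by simp
qed

lemma Tm_contr: "nsq (Tm \<sigma> \<psi>) \<le> nsq \<psi>"
  using conserv[of \<sigma> \<psi>] proj_nonneg[of Acc "mv \<sigma> \<psi>"] proj_nonneg[of Rej "mv \<sigma> \<psi>"] by linarith

lemma vec_contr: "nsq (vec w \<psi>) \<le> nsq \<psi>"
  by (induction w arbitrary: \<psi>) (auto intro: order_trans Tm_contr)

lemma nn_le_iff: "nn a \<le> nn b \<longleftrightarrow> nsq a \<le> nsq b"
  by (simp add: nsq_nn power2_le_iff_abs_le abs_of_nonneg)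

lemma vec_contr_nn: "nn (vec w \<psi>) \<le> nn \<psi>"
  using vec_contr nn_le_iff by blast

lemma gain_cons: "gain w \<psi> + rgain w \<psi> + nsq (vec w \<psi>) = nsq \<psi>"
proof (induction w arbitrary: \<psi>)
  case (Cons \<sigma> w)
  show ?case using Cons.IH[of "Tm \<sigma> \<psi>"] conserv[of \<sigma> \<psi>] by simp
qed simp

lemma gain_nonneg[simp]: "0 \<le> gain w \<psi>"
  by (induction w arbitrary: \<psi>) (simp_all add: add_nonneg_nonneg)
lemma rgain_nonneg[simp]: "0 \<le> rgain w \<psi>"
  by (induction w arbitrary: \<psi>) (simp_all add: add_nonneg_nonneg)

lemma gain_le: "gain w \<psi> \<le> nsq \<psi> - nsq (vec w \<psi>)"
  using gain_cons[of w \<psi>] rgain_nonneg[of w \<psi>] by linarith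

end

context qfa begin

lemma sqrt_le_nn: "s \<le> (nn v)^2 \<Longrightarrow> sqrt s \<le> nn v"
  using real_sqrt_le_mono[of s "(nn v)^2"] by simp

lemma piece_bound: "(nr Acc (mv \<sigma> v))^2 + (nn (Tm \<sigma> v))^2 \<le> (nn v)^2"
proof -
  have "(nr Acc (mv \<sigma> v))^2 + (nr Rej (mv \<sigma> v))^2 + (nn (Tm \<sigma> v))^2 = (nn v)^2"
    using conserv[of \<sigma> v] by (simp add: proj_nr nsq_nn)
  moreover have "0 \<le> (nr Rej (mv \<sigma> v))^2" by simp
  ultimately show ?thesis by linarith
qed

lemma gain_lip: "\<bar>gain w a - gain w b\<bar> \<le> nn (a - b) * (nn a + nn b)"
proof (induction w arbitrary: a b)
  case Nil show ?case by simp
next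
  case (Cons \<sigma> w)
  define d where "d = a - b"
  define x1 where "x1 = nr Acc (mv \<sigma> d)"
  define x2 where "x2 = nn (Tm \<sigma> d)"
  define y1 where "y1 = nr Acc (mv \<sigma> a)"
  define y2 where "y2 = nn (Tm \<sigma> a)"
  define z1 where "z1 = nr Acc (mv \<sigma> b)"
  define z2 where "z2 = nn (Tm \<sigma> b)"
  have "\<bar>y1 - z1\<bar> \<le> x1" unfolding x1_def y1_def z1_def d_def mv_diff by (rule nr_diff)
  hence h1: "\<bar>proj_norm2 Acc (mv \<sigma> a) - proj_norm2 Acc (mv \<sigma> b)\<bar> \<le> x1 * (y1 + z1)"
    using sq_diff_le[of y1 z1 x1] unfolding y1_def z1_def by (simp add: proj_nr)
  have h2: "\<bar>gain w (Tm \<sigma> a) - gain w (Tm \<sigma> b)\<bar> \<le> x2 * (y2 + z2)"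
    using Cons.IH[of "Tm \<sigma> a" "Tm \<sigma> b"] unfolding x2_def y2_def z2_def d_def Tm_diff .
  have sx: "sqrt (x1^2 + x2^2) \<le> nn d" unfolding x1_def x2_def by (rule sqrt_le_nn, rule piece_bound)
  have sy: "sqrt (y1^2 + y2^2) \<le> nn a" unfolding y1_def y2_def by (rule sqrt_le_nn, rule piece_bound)
  have sz: "sqrt (z1^2 + z2^2) \<le> nn b" unfolding z1_def z2_def by (rule sqrt_le_nn, rule piece_bound)
  have "\<bar>gain (\<sigma>#w) a - gain (\<sigma>#w) b\<bar> \<le> x1 * (y1 + z1) + x2 * (y2 + z2)"
    using h1 h2 by simp
  also have "\<dots> \<le> sqrt (x1^2+x2^2) * (sqrt (y1^2+y2^2) + sqrt (z1^2+z2^2))" by (rule cs2b)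
  also have "\<dots> \<le> nn d * (nn a + nn b)"
    using sx sy sz by (intro mult_mono add_mono) auto
  finally show ?case unfolding d_def .
qed

lemma step_eq: "mmqfa_step n U Acc Rej (\<psi>, pa, pr) \<sigma> =
   (Tm \<sigma> \<psi>, pa + proj_norm2 Acc (mv \<sigma> \<psi>), pr + proj_norm2 Rej (mv \<sigma> \<psi>))"
  unfolding mmqfa_step_def Tm_def mv_def Non_def by (simp add: Let_def)

lemma foldl_step: "foldl (mmqfa_step n U Acc Rej) (\<psi>, pa, pr) w = (vec w \<psi>, pa + gain w \<psi>, pr + rgain w \<psi>)"
  by (induction w arbitrary: \<psi> pa pr) (simp_all add: step_eq algebra_simps)

definition init :: "nat \<Rightarrow> complex" where "init = (\<lambda>i. if i = q0 then 1 else 0)"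
definition psi :: "'a list \<Rightarrow> nat \<Rightarrow> complex" where "psi u = vec (map Some u) init"
definition pacc :: "'a list \<Rightarrow> real" where "pacc u = gain (map Some u) init"
abbreviation accp :: "'a list \<Rightarrow> real" where "accp x \<equiv> mmqfa_accept_prob n U q0 Acc Rej x"

lemma nsq_init: "nsq init = 1"
proof -
  have "nsq init = (\<Sum>i<n. if i = q0 then 1 else 0)"
    unfolding nsq_def proj_norm2_def init_def by (intro sum.cong refl) auto
  also have "\<dots> = 1" using facts(1) by (simp add: sum.delta)
  finally show ?thesis .
qed

lemma psi_append: "psi (u @ v) = vec (map Some v) (psi u)"
  unfolding psi_def by (simp add: vec_append)
lemma pacc_append: "pacc (u @ v) = pacc u + gain (map Some v) (psi u)"
  unfolding psi_def pacc_def by (simp add: gain_append)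

lemma accp_split: "accp (u @ z) = pacc u + gain (map Some z @ [None]) (psi u)"
  unfolding mmqfa_accept_prob_def foldl_step psi_def pacc_def init_def by (simp add: gain_append)

lemma nsq_psi: "nsq (psi u) \<le> 1"
  using vec_contr[of "map Some u" init] nsq_init unfolding psi_def by simp
lemma nn_psi: "nn (psi u) \<le> 1"
proof -
  have "(nn (psi u))^2 \<le> 1^2" using nsq_psi[of u] by (simp add: nsq_nn)
  thus ?thesis by (rule power2_le_imp_le) simp
qed
lemma pacc_bounds: "0 \<le> pacc u" "pacc u \<le> 1"
  unfolding pacc_def using gain_le[of "map Some u" init] nsq_init nsq_nonneg[of "vec (map Some u) init"]
  by (simp, linarith)

lemma acc_diff: "\<bar>accp (u @ z) - accp (v @ z)\<bar> \<le> \<bar>pacc u - pacc v\<bar> + 2 * nn (psi u - psi v)"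
proof -
  have "\<bar>gain (map Some z @ [None]) (psi u) - gain (map Some z @ [None]) (psi v)\<bar> \<le> nn (psi u - psi v) * (nn (psi u) + nn (psi v))"
    by (rule gain_lip)
  also have "\<dots> \<le> nn (psi u - psi v) * 2" using nn_psi[of u] nn_psi[of v] by (intro mult_left_mono) auto
  finally show ?thesis unfolding accp_split by linarith
qed

lemma pacc_ext: "\<bar>pacc (A @ v) - pacc A\<bar> \<le> 2 * nn (psi A - psi (A @ v))"
proof -
  have g: "0 \<le> pacc (A @ v) - pacc A" "pacc (A @ v) - pacc A \<le> nsq (psi A) - nsq (psi (A @ v))"
    using gain_le[of "map Some v" "psi A"] unfolding pacc_append psi_append by auto
  have "\<bar>nn (psi A) - nn (psi (A @ v))\<bar> \<le> nn (psi A - psi (A @ v))" unfolding nn_def by (rule nr_diff)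
  hence "\<bar>(nn (psi A))^2 - (nn (psi (A @ v)))^2\<bar> \<le> nn (psi A - psi (A @ v)) * (nn (psi A) + nn (psi (A @ v)))"
    by (intro sq_diff_le) auto
  also have "\<dots> \<le> nn (psi A - psi (A @ v)) * 2" using nn_psi[of A] nn_psi[of "A @ v"] by (intro mult_left_mono) auto
  finally show ?thesis using g unfolding nsq_nn by linarith
qed

end

locale rmm = qfa n U q0 Acc Rej for n U q0 Acc Rej +
  fixes L :: "'a list set" and lam eps :: real
  assumes eps_pos: "eps > 0"
    and sep: "\<forall>x. (x \<in> L \<longrightarrow> mmqfa_accept_prob n U q0 Acc Rej x > lam + eps) \<and>
                  (x \<notin> L \<longrightarrow> mmqfa_accept_prob n U q0 Acc Rej x < lam - eps)"
begin

lemma quot_eq: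
  assumes "\<forall>z. \<bar>accp (u @ z) - accp (v @ z)\<bar> < 2 * eps"
  shows "lquot L u = lquot L v"
proof -
  have "u @ z \<in> L \<longleftrightarrow> v @ z \<in> L" for z
    using assms[rule_format, of z] sep[rule_format, of "u @ z"] sep[rule_format, of "v @ z"] by auto
  thus ?thesis unfolding lquot_def by auto
qed

lemma ext_close:
  assumes "nn (psi A - psi (A @ v)) < eps / 2"
  shows "lquot L A = lquot L (A @ v)"
proof (rule quot_eq, rule allI)
  fix z
  have "\<bar>accp (A @ z) - accp ((A @ v) @ z)\<bar> \<le> \<bar>pacc A - pacc (A @ v)\<bar> + 2 * nn (psi A - psi (A @ v))"
    by (rule acc_diff)
  also have "\<dots> \<le> 4 * nn (psi A - psi (A @ v))" using pacc_ext[of A v] by linarith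
  finally show "\<bar>accp (A @ z) - accp ((A @ v) @ z)\<bar> < 2 * eps" using assms by linarith
qed

lemma regular: "finite (range (lquot L))"
proof (rule ccontr)
  assume inf: "infinite (range (lquot L))"
  define rep where "rep S = (SOME u. lquot L u = S)" for S
  have rep: "lquot L (rep S) = S" if "S \<in> range (lquot L)" for S
    using that unfolding rep_def by (metis (mono_tags, lifting) imageE someI)
  define f where "f S i = (if i < n then psi (rep S) i else complex_of_real (pacc (rep S)))" for S i
  define d where "d = eps / (4 * (real n + 1))"
  have dpos: "d > 0" unfolding d_def using eps_pos by simp
  have bnd: "\<forall>S\<in>range (lquot L). \<forall>i\<in>{..n}. cmod (f S i) \<le> 1"
  proof (intro ballI)
    fix S i assume "i \<in> {..n}"
    show "cmod (f S i) \<le> 1"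
    proof (cases "i < n")
      case True
      hence "cmod (psi (rep S) i) \<le> nn (psi (rep S))" unfolding nn_def by (intro member_le_nr) auto
      thus ?thesis using True nn_psi[of "rep S"] unfolding f_def by simp
    next
      case False thus ?thesis using pacc_bounds[of "rep S"] unfolding f_def by simp
    qed
  qed
  obtain S1 S2 where S: "S1 \<in> range (lquot L)" "S2 \<in> range (lquot L)" "S1 \<noteq> S2"
    and cl: "\<forall>i\<in>{..n}. cmod (f S1 i - f S2 i) < 2 * d"
    using grid_pigeon_inf[OF finite_atMost dpos inf bnd] by blast
  define u where "u = rep S1"
  define v where "v = rep S2"
  have p: "\<bar>pacc u - pacc v\<bar> < 2 * d"
    using cl[rule_format, of n] unfolding f_def u_def v_def by (simp flip: of_real_diff)
  have "\<forall>i\<in>{..<n}. cmod ((psi u - psi v) i) \<le> 2 * d"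
  proof
    fix i assume i: "i \<in> {..<n}"
    hence "cmod (f S1 i - f S2 i) < 2 * d" using cl by auto
    moreover have "f S1 i - f S2 i = (psi u - psi v) i" using i unfolding f_def u_def v_def by simp
    ultimately show "cmod ((psi u - psi v) i) \<le> 2 * d" by simp
  qed
  hence q: "nn (psi u - psi v) \<le> real n * (2 * d)" unfolding nn_def using nr_coord_bound[of "{..<n}" "psi u - psi v" "2 * d"] by simp
  have "\<forall>z. \<bar>accp (u @ z) - accp (v @ z)\<bar> < 2 * eps"
  proof
    fix z
    have "\<bar>accp (u @ z) - accp (v @ z)\<bar> \<le> \<bar>pacc u - pacc v\<bar> + 2 * nn (psi u - psi v)" by (rule acc_diff)
    also have "\<dots> < 2 * d + 2 * (real n * (2 * d))" using p q by linarith
    also have "\<dots> = 2 * d + 4 * (real n * d)" by simp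
    also have "\<dots> < 2 * eps"
    proof -
      have "d * (4 * (real n + 1)) = eps" unfolding d_def by simp
      hence "4 * (real n * d) + 4 * d = eps" by (simp add: algebra_simps)
      thus ?thesis using dpos eps_pos by linarith
    qed
    finally show "\<bar>accp (u @ z) - accp (v @ z)\<bar> < 2 * eps" .
  qed
  hence "lquot L u = lquot L v" by (rule quot_eq)
  thus False using rep[OF S(1)] rep[OF S(2)] S(3) unfolding u_def v_def by simp
qed

end

definition pw :: "'b list \<Rightarrow> nat \<Rightarrow> 'b list" where "pw x t = concat (replicate t x)"

lemma pw_add: "pw x (a + b) = pw x a @ pw x b"
  unfolding pw_def by (simp add: replicate_add)

lemma pw_Suc_right: "pw x (Suc m) = pw x m @ x"
  using pw_add[of x m 1] by (simp add: pw_def)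

lemma cmod_parallelogram: "(cmod (z - w))^2 + (cmod (z + w))^2 = 2 * (cmod z)^2 + 2 * (cmod w)^2"
  unfolding cmod_power2 by (simp add: power2_diff power2_sum)

lemma nr_double: "nr A (v + v) = 2 * nr A v"
proof -
  have "nr A (v + v) = L2_set (\<lambda>i. 2 * cmod (v i)) A" unfolding nr_def
    by (rule L2_set_cong) (auto simp: mult_2[symmetric] norm_mult)
  also have "\<dots> = 2 * nr A v" unfolding nr_def by (rule L2_set_right_distrib[symmetric]) simp
  finally show ?thesis .
qed

context qfa begin

lemma parallelogram: "nsq (a - b) + nsq (a + b) = 2 * nsq a + 2 * nsq b"
  unfolding nsq_def proj_norm2_def
  by (simp add: sum.distrib[symmetric] sum_distrib_left cmod_parallelogram)

lemma vec_pw: "vec (map Some (pw x a)) (vec (map Some (pw x b)) \<phi>) = vec (map Some (pw x (b + a))) \<phi>"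
  by (simp add: pw_add vec_append)

lemma recur:
  assumes lt: "t1 < t2"
    and loss: "nsq \<phi> - nsq (vec (map Some (pw x t1)) \<phi>) \<le> \<eta>"
    and close: "nn (vec (map Some (pw x t2)) \<phi> - vec (map Some (pw x t1)) \<phi>) \<le> \<delta>"
    and nb: "nn \<phi> \<le> 1"
  shows "(nn (vec (map Some (pw x (t2 - t1))) \<phi> - \<phi>))^2 \<le> 4 * \<eta> + 4 * \<delta>"
proof -
  define a where "a = vec (map Some (pw x (t2 - t1))) \<phi>"
  define M where "M = vec (map Some (pw x t1))"
  have Ma: "M a = vec (map Some (pw x t2)) \<phi>" unfolding M_def a_def vec_pw using lt by simp
  define c where "c = nn (M \<phi>)"
  have c0: "0 \<le> c" unfolding c_def by simp
  have c1: "c \<le> 1" unfolding c_def M_def using vec_contr_nn[of _ \<phi>] nb by (meson order_trans)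
  have d0: "0 \<le> \<delta>" using close nn_nonneg by (meson order_trans)
  have cl: "nn (M \<phi> - M a) \<le> \<delta>"
  proof -
    have "nn (M \<phi> - M a) = nn (M a - M \<phi>)" unfolding nn_def by (rule nr_minus_sym)
    also have "M a - M \<phi> = vec (map Some (pw x t2)) \<phi> - vec (map Some (pw x t1)) \<phi>"
      using Ma unfolding M_def by simp
    finally show ?thesis using close by linarith
  qed
  have "nn (M \<phi> + M \<phi>) \<le> nn (M a + M \<phi>) + nn (M \<phi> - M a)"
    using nr_add'[of "{..<n}" "M a + M \<phi>" "M \<phi> - M a"] unfolding nn_def by simp
  hence lb: "2 * c - \<delta> \<le> nn (M a + M \<phi>)" using cl unfolding c_def nn_def nr_double by linarith
  have "nn (M a + M \<phi>) \<le> nn (a + \<phi>)" unfolding M_def vec_add[symmetric] by (rule vec_contr_nn)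
  hence lb2: "2 * c - \<delta> \<le> nn (a + \<phi>)" using lb by linarith
  have sq: "4 * c^2 - 4 * c * \<delta> \<le> nsq (a + \<phi>)"
  proof (cases "2 * c - \<delta> \<ge> 0")
    case True
    hence "(2 * c - \<delta>)^2 \<le> (nn (a + \<phi>))^2" using lb2 by (intro power_mono) auto
    moreover have "4 * c^2 - 4 * c * \<delta> \<le> (2 * c - \<delta>)^2" by (simp add: power2_eq_square algebra_simps)
    ultimately show ?thesis by (simp add: nsq_nn)
  next
    case False
    hence "4 * c^2 - 4 * c * \<delta> \<le> 0" using c0 d0 by (simp add: power2_eq_square) (smt (verit) mult_left_mono)
    thus ?thesis using nsq_nonneg[of "a + \<phi>"] by linarith
  qed
  have na: "nsq a \<le> nsq \<phi>" unfolding a_def by (rule vec_contr)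
  have cl2: "nsq \<phi> - c^2 \<le> \<eta>" using loss unfolding c_def M_def nsq_nn .
  have "nsq (a - \<phi>) = 2 * nsq a + 2 * nsq \<phi> - nsq (a + \<phi>)" using parallelogram[of a \<phi>] by linarith
  also have "\<dots> \<le> 4 * nsq \<phi> - 4 * c^2 + 4 * c * \<delta>" using na sq by linarith
  also have "\<dots> \<le> 4 * \<eta> + 4 * \<delta>"
  proof -
    have "c * \<delta> \<le> \<delta>" using c1 d0 c0 mult_right_mono[of c 1 \<delta>] by simp
    thus ?thesis using cl2 by linarith
  qed
  finally show ?thesis unfolding a_def nsq_nn .
qed

end

context qfa begin

lemma step_final:
  assumes s: "s1 < s2" "s2 \<le> G" and t: "t = Suc G"
    and loss: "nsq \<phi> - nsq (vec (map Some (pw x t @ y)) \<phi>) \<le> eta"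
    and cl: "\<forall>j<n. cmod (vec (map Some (pw x s1)) \<phi> j - vec (map Some (pw x s2)) \<phi> j) < 2 * d"
    and dl: "real n * (2 * d) \<le> dl"
    and nb: "nn \<phi> \<le> 1"
    and ce: "4 * eta + 4 * dl < c^2" and c: "c > 0"
  shows "nn (\<phi> - vec (map Some (pw x (s2 - s1))) \<phi>) < c"
proof -
  have tsplit: "pw x t @ y = pw x s1 @ (pw x (t - s1) @ y)"
    using pw_add[of x s1 "t - s1"] s t by simp
  have "nsq (vec (map Some (pw x t @ y)) \<phi>) \<le> nsq (vec (map Some (pw x s1)) \<phi>)"
    unfolding tsplit map_append vec_append by (meson vec_contr order_trans)
  hence lossA: "nsq \<phi> - nsq (vec (map Some (pw x s1)) \<phi>) \<le> eta" using loss by linarith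
  have "\<forall>j\<in>{..<n}. cmod ((vec (map Some (pw x s2)) \<phi> - vec (map Some (pw x s1)) \<phi>) j) \<le> 2 * d"
  proof
    fix j assume "j \<in> {..<n}"
    hence "cmod (vec (map Some (pw x s1)) \<phi> j - vec (map Some (pw x s2)) \<phi> j) < 2 * d" using cl by auto
    thus "cmod ((vec (map Some (pw x s2)) \<phi> - vec (map Some (pw x s1)) \<phi>) j) \<le> 2 * d"
      by (simp add: norm_minus_commute)
  qed
  hence "nn (vec (map Some (pw x s2)) \<phi> - vec (map Some (pw x s1)) \<phi>) \<le> real n * (2 * d)"
    unfolding nn_def using nr_coord_bound[of "{..<n}"] by simp
  hence closeA: "nn (vec (map Some (pw x s2)) \<phi> - vec (map Some (pw x s1)) \<phi>) \<le> dl" using dl by linarith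
  have "(nn (vec (map Some (pw x (s2 - s1))) \<phi> - \<phi>))^2 \<le> 4 * eta + 4 * dl"
    by (rule recur[OF s(1) lossA closeA nb])
  hence "(nn (\<phi> - vec (map Some (pw x (s2 - s1))) \<phi>))^2 < c^2"
    using ce unfolding nn_def by (simp add: nr_minus_sym)
  thus ?thesis using c by (simp add: power_less_imp_less_base)
qed

end

locale qfa2 = A: qfa n1 U1 q01 Acc1 Rej1 + B: qfa n2 U2 q02 Acc2 Rej2
  for n1 :: nat and U1 :: "'a option \<Rightarrow> nat \<Rightarrow> nat \<Rightarrow> complex" and q01 Acc1 Rej1
  and n2 :: nat and U2 :: "'a option \<Rightarrow> nat \<Rightarrow> nat \<Rightarrow> complex" and q02 Acc2 Rej2
begin

lemma core:
  assumes c: "c > 0"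
  shows "\<exists>t m k. 1 \<le> t \<and> 1 \<le> k \<and>
     A.nn (A.psi (u @ pw (pw x t @ y) m) - A.psi ((u @ pw (pw x t @ y) m) @ pw x k)) < c \<and>
     B.nn (B.psi (u @ pw (pw x t @ y) m) - B.psi ((u @ pw (pw x t @ y) m) @ pw x k)) < c"
proof -
  define dl where "dl = c^2 / 16"
  define eta where "eta = c^2 / 16"
  define d where "d = dl / (2 * (real n1 + real n2 + 1))"
  have dlpos: "dl > 0" and etapos: "eta > 0" using c unfolding dl_def eta_def by simp_all
  have dpos: "d > 0" using dlpos unfolding d_def by (simp add: add_pos_nonneg)
  have ce: "4 * eta + 4 * dl < c^2" using c unfolding eta_def dl_def by simp
  have dl1: "real n1 * (2 * d) \<le> dl" and dl2: "real n2 * (2 * d) \<le> dl"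
  proof -
    have pos: "real n1 + real n2 + 1 > 0" by simp
    have e: "2 * d * (real n1 + real n2 + 1) = dl" unfolding d_def using pos by (simp add: field_simps)
    show "real n1 * (2 * d) \<le> dl" using e dpos by (smt (verit) mult_right_mono of_nat_0_le_iff distrib_left mult.commute)
    show "real n2 * (2 * d) \<le> dl" using e dpos by (smt (verit) mult_right_mono of_nat_0_le_iff distrib_left mult.commute)
  qed
  define I where "I = ({..<n1} <+> {..<n2})"
  have finI: "finite I" unfolding I_def by simp
  obtain G where G: "\<forall>f::nat \<Rightarrow> nat + nat \<Rightarrow> complex. (\<forall>t\<le>G. \<forall>i\<in>I. cmod (f t i) \<le> 1) \<longrightarrow>
           (\<exists>t1 t2. t1 < t2 \<and> t2 \<le> G \<and> (\<forall>i\<in>I. cmod (f t1 i - f t2 i) < 2 * d))"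
    using grid_pigeon[OF finI dpos] by blast
  define t where "t = Suc G"
  define W where "W m = u @ pw (pw x t @ y) m" for m
  define N where "N m = A.nsq (A.psi (W m)) + B.nsq (B.psi (W m))" for m
  define Mx where "Mx = nat (ceiling (2 / eta)) + 1"
  have Mxpos: "real Mx > 0" unfolding Mx_def by simp
  have "2 / eta < real Mx" unfolding Mx_def by linarith
  hence Mxeta: "2 / real Mx < eta" using Mxpos etapos by (simp add: field_simps)
  have Wsuc: "W (Suc m) = W m @ (pw x t @ y)" for m unfolding W_def by (simp add: pw_Suc_right)
  have Adec: "A.nsq (A.psi (W (Suc m))) \<le> A.nsq (A.psi (W m))" for m
    unfolding Wsuc A.psi_append by (rule A.vec_contr)
  have Bdec: "B.nsq (B.psi (W (Suc m))) \<le> B.nsq (B.psi (W m))" for m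
    unfolding Wsuc B.psi_append by (rule B.vec_contr)
  have "\<exists>m<Mx. N m - N (Suc m) \<le> 2 / real Mx"
  proof (rule ccontr)
    assume "\<not> ?thesis"
    hence h: "\<And>m. m < Mx \<Longrightarrow> N (Suc m) < N m - 2 / real Mx" by force
    have ind: "j \<le> Mx \<Longrightarrow> N j \<le> N 0 - real j * (2 / real Mx)" for j
    proof (induction j)
      case 0 show ?case by simp
    next
      case (Suc j)
      hence a: "N (Suc j) < N j - 2 / real Mx" using h by simp
      have b: "N j \<le> N 0 - real j * (2 / real Mx)" using Suc by simp
      have "real (Suc j) * (2 / real Mx) = real j * (2 / real Mx) + 2 / real Mx" by (simp add: algebra_simps add_divide_distrib)
      thus ?case using a b by linarith
    qed
    obtain j where j: "Mx = Suc j" using Mx_def by simp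
    have "N Mx < N j - 2 / real Mx" using h j by simp
    also have "\<dots> \<le> N 0 - real j * (2 / real Mx) - 2 / real Mx" using ind[of j] j by simp
    also have "\<dots> = N 0 - 2"
    proof -
      have "real j * (2 / real Mx) + 2 / real Mx = (real j + 1) * (2 / real Mx)" by (simp add: algebra_simps add_divide_distrib)
      also have "real j + 1 = real Mx" using j by simp
      also have "real Mx * (2 / real Mx) = 2" using Mxpos by simp
      finally show ?thesis by linarith
    qed
    finally have "N Mx < N 0 - 2" .
    moreover have "N 0 \<le> 2" unfolding N_def using A.nsq_psi B.nsq_psi by (smt (verit))
    moreover have "N Mx \<ge> 0" unfolding N_def by simp
    ultimately show False by linarith
  qed
  then obtain m where m: "m < Mx" "N m - N (Suc m) \<le> 2 / real Mx" by blast
  define pA where "pA = A.psi (W m)"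
  define pB where "pB = B.psi (W m)"
  have lossA: "A.nsq pA - A.nsq (A.vec (map Some (pw x t @ y)) pA) \<le> eta"
    using m(2) Mxeta Bdec[of m] unfolding pA_def N_def Wsuc A.psi_append B.psi_append by linarith
  have lossB: "B.nsq pB - B.nsq (B.vec (map Some (pw x t @ y)) pB) \<le> eta"
    using m(2) Mxeta Adec[of m] unfolding pB_def N_def Wsuc A.psi_append B.psi_append by linarith
  define f where "f s i = (case i of Inl j \<Rightarrow> A.vec (map Some (pw x s)) pA j | Inr j \<Rightarrow> B.vec (map Some (pw x s)) pB j)" for s i
  have fb: "\<forall>s\<le>G. \<forall>i\<in>I. cmod (f s i) \<le> 1"
  proof (intro allI impI ballI)
    fix s i assume "i \<in> I"
    then consider j where "i = Inl j" "j < n1" | j where "i = Inr j" "j < n2" unfolding I_def by auto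
    thus "cmod (f s i) \<le> 1"
    proof cases
      case 1
      have "cmod (A.vec (map Some (pw x s)) pA j) \<le> A.nn (A.vec (map Some (pw x s)) pA)"
        unfolding A.nn_def using 1 by (intro member_le_nr) auto
      also have "\<dots> \<le> A.nn pA" by (rule A.vec_contr_nn)
      also have "\<dots> \<le> 1" unfolding pA_def by (rule A.nn_psi)
      finally show ?thesis using 1 unfolding f_def by simp
    next
      case 2
      have "cmod (B.vec (map Some (pw x s)) pB j) \<le> B.nn (B.vec (map Some (pw x s)) pB)"
        unfolding B.nn_def using 2 by (intro member_le_nr) auto
      also have "\<dots> \<le> B.nn pB" by (rule B.vec_contr_nn)
      also have "\<dots> \<le> 1" unfolding pB_def by (rule B.nn_psi)
      finally show ?thesis using 2 unfolding f_def by simp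
    qed
  qed
  obtain s1 s2 where s: "s1 < s2" "s2 \<le> G" and scl: "\<forall>i\<in>I. cmod (f s1 i - f s2 i) < 2 * d"
    using G fb by blast
  have clA: "\<forall>j<n1. cmod (A.vec (map Some (pw x s1)) pA j - A.vec (map Some (pw x s2)) pA j) < 2 * d"
  proof (intro allI impI)
    fix j assume "j < n1"
    hence "Inl j \<in> I" unfolding I_def by (simp add: Plus_def)
    thus "cmod (A.vec (map Some (pw x s1)) pA j - A.vec (map Some (pw x s2)) pA j) < 2 * d"
      using scl unfolding f_def by fastforce
  qed
  have clB: "\<forall>j<n2. cmod (B.vec (map Some (pw x s1)) pB j - B.vec (map Some (pw x s2)) pB j) < 2 * d"
  proof (intro allI impI)
    fix j assume "j < n2"
    hence "Inr j \<in> I" unfolding I_def by (simp add: Plus_def)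
    thus "cmod (B.vec (map Some (pw x s1)) pB j - B.vec (map Some (pw x s2)) pB j) < 2 * d"
      using scl unfolding f_def by fastforce
  qed
  have rA: "A.nn (pA - A.vec (map Some (pw x (s2 - s1))) pA) < c"
    by (rule A.step_final[OF s t_def lossA clA dl1 _ ce c]) (simp add: pA_def A.nn_psi)
  have rB: "B.nn (pB - B.vec (map Some (pw x (s2 - s1))) pB) < c"
    by (rule B.step_final[OF s t_def lossB clB dl2 _ ce c]) (simp add: pB_def B.nn_psi)
  show ?thesis
  proof (intro exI conjI)
    show "1 \<le> t" unfolding t_def by simp
    show "1 \<le> s2 - s1" using s by simp
    show "A.nn (A.psi (u @ pw (pw x t @ y) m) - A.psi ((u @ pw (pw x t @ y) m) @ pw x (s2 - s1))) < c"
      using rA unfolding pA_def W_def A.psi_append .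
    show "B.nn (B.psi (u @ pw (pw x t @ y) m) - B.psi ((u @ pw (pw x t @ y) m) @ pw x (s2 - s1))) < c"
      using rB unfolding pB_def W_def B.psi_append .
  qed
qed

end

definition rq :: "'a list set \<Rightarrow> 'a list \<Rightarrow> 'a list set" where
  "rq S w = {v. w @ v \<in> S}"

lemma run_rq: "dfa_run min_dfa_delta S w = rq S w"
  unfolding dfa_run_def rq_def
  by (induction w arbitrary: S) (simp_all add: min_dfa_delta_def)

lemma rq_append: "rq S (w1 @ w2) = rq (rq S w1) w2"
  unfolding rq_def by simp

lemma rq_lquot: "rq (lquot L u) w = lquot L (u @ w)"
  unfolding rq_def lquot_def by simp

lemma lquot_inter: "lquot (L1 \<inter> L2) w = lquot L1 w \<inter> lquot L2 w"
  unfolding lquot_def by auto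

lemma rq_pw_fix:
  assumes "rq q x = q"
  shows "rq q (pw x m) = q"
proof (induction m)
  case 0 show ?case by (simp add: pw_def rq_def)
next
  case (Suc m) thus ?case by (simp add: pw_Suc_right rq_append assms)
qed

lemma rq_pw_enter:
  assumes "rq q1 x = q2" "rq q2 x = q2" "1 \<le> j"
  shows "rq q1 (pw x j) = q2"
proof -
  obtain i where j: "j = Suc i" using assms(3) by (cases j) auto
  have "pw x j = x @ pw x i" unfolding j pw_def by simp
  thus ?thesis using rq_pw_fix[OF assms(2)] assms(1) by (simp add: rq_append)
qed

theorem theorem4p6:
  assumes "\<forall>L :: 'a::finite list set. poc_lang L \<longrightarrow> L \<in> RMM"
  shows "\<forall>L1 L2 :: 'a list set. L1 \<in> RMM \<longrightarrow> L2 \<in> RMM \<longrightarrow> L1 \<inter> L2 \<in> RMM"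
proof (intro allI impI)
  fix L1 L2 :: "'a list set"
  assume "L1 \<in> RMM" "L2 \<in> RMM"
  then obtain n1 U1 q01 Acc1 Rej1 lam1 eps1 where
    h1: "mmqfa_wf n1 U1 q01 Acc1 Rej1" "eps1 > 0"
      "\<forall>x. (x \<in> L1 \<longrightarrow> mmqfa_accept_prob n1 U1 q01 Acc1 Rej1 x > lam1 + eps1) \<and>
          (x \<notin> L1 \<longrightarrow> mmqfa_accept_prob n1 U1 q01 Acc1 Rej1 x < lam1 - eps1)"
    unfolding RMM_def by blast
  obtain n2 U2 q02 Acc2 Rej2 lam2 eps2 where
    h2: "mmqfa_wf n2 U2 q02 Acc2 Rej2" "eps2 > 0"
      "\<forall>x. (x \<in> L2 \<longrightarrow> mmqfa_accept_prob n2 U2 q02 Acc2 Rej2 x > lam2 + eps2) \<and>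
          (x \<notin> L2 \<longrightarrow> mmqfa_accept_prob n2 U2 q02 Acc2 Rej2 x < lam2 - eps2)"
    using \<open>L2 \<in> RMM\<close> unfolding RMM_def by blast
  interpret R1: rmm n1 U1 q01 Acc1 Rej1 L1 lam1 eps1
    using h1 by (unfold_locales) auto
  interpret R2: rmm n2 U2 q02 Acc2 Rej2 L2 lam2 eps2
    using h2 by (unfold_locales) auto
  interpret Q: qfa2 n1 U1 q01 Acc1 Rej1 n2 U2 q02 Acc2 Rej2
    by unfold_locales
  let ?L = "L1 \<inter> L2"
  have reg: "regular_lang ?L"
  proof -
    have "range (lquot ?L) \<subseteq> (\<lambda>(a, b). a \<inter> b) ` (range (lquot L1) \<times> range (lquot L2))"
      by (auto simp: lquot_inter)
    moreover have "finite ((\<lambda>(a, b). a \<inter> b) ` (range (lquot L1) \<times> range (lquot L2)))"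
      using R1.regular R2.regular by simp
    ultimately show ?thesis unfolding regular_lang_def min_dfa_states_def by (rule finite_subset)
  qed
  have poc: "dfa_poc (min_dfa_states ?L) min_dfa_delta min_dfa_final"
    unfolding dfa_poc_def
  proof
    assume "\<exists>q1\<in>min_dfa_states ?L. \<exists>q2\<in>min_dfa_states ?L. \<exists>x y. x \<noteq> [] \<and> y \<noteq> [] \<and>
           dfa_distinguishable min_dfa_delta min_dfa_final q1 q2 \<and>
           dfa_run min_dfa_delta q1 x = q2 \<and> dfa_run min_dfa_delta q2 x = q2 \<and>
           dfa_run min_dfa_delta q2 y = q1"
    then obtain q1 q2 x y where q: "q1 \<in> min_dfa_states ?L"
      and dist: "dfa_distinguishable min_dfa_delta min_dfa_final q1 q2"
      and r1: "rq q1 x = q2" and r2: "rq q2 x = q2" and r3: "rq q2 y = q1"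
      unfolding run_rq by blast
    have ne: "q1 \<noteq> q2" using dist unfolding dfa_distinguishable_def by auto
    obtain u where u: "q1 = lquot ?L u" using q unfolding min_dfa_states_def by auto
    define c where "c = min eps1 eps2 / 2"
    have "c > 0" unfolding c_def using h1(2) h2(2) by simp
    then obtain t m k where tmk: "1 \<le> t" "1 \<le> k"
      "R1.nn (R1.psi (u @ pw (pw x t @ y) m) - R1.psi ((u @ pw (pw x t @ y) m) @ pw x k)) < c"
      "R2.nn (R2.psi (u @ pw (pw x t @ y) m) - R2.psi ((u @ pw (pw x t @ y) m) @ pw x k)) < c"
      using Q.core[of c u x y] by blast
    define A where "A = u @ pw (pw x t @ y) m"
    have "lquot L1 A = lquot L1 (A @ pw x k)"
      by (rule R1.ext_close) (use tmk(3) in \<open>simp add: A_def c_def\<close>)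
    moreover have "lquot L2 A = lquot L2 (A @ pw x k)"
      by (rule R2.ext_close) (use tmk(4) in \<open>simp add: A_def c_def\<close>)
    ultimately have eq: "lquot ?L A = lquot ?L (A @ pw x k)" by (simp add: lquot_inter)
    have cyc: "rq q1 (pw x t @ y) = q1" using rq_pw_enter[OF r1 r2 tmk(1)] r3 by (simp add: rq_append)
    have "lquot ?L A = q1" unfolding A_def u rq_lquot[symmetric] using rq_pw_fix[OF cyc] u by simp
    moreover have "lquot ?L (A @ pw x k) = q2"
      unfolding rq_lquot[symmetric] using \<open>lquot ?L A = q1\<close> rq_pw_enter[OF r1 r2 tmk(2)] by (simp add: rq_lquot)
    ultimately show False using eq ne by simp
  qed
  have "poc_lang ?L" unfolding poc_lang_def using reg poc by simp
  thus "?L \<in> RMM" using assms by blast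
qed

end
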